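(* Let $M\in\mathbb{N}$, let $I$ be a finite set and let $g_\bullet\colon\mathbb{Z}\to\{0,1,\dots,M-1\}$ be a gp map parametrised by $\mathbb{R}^I$. Then there exist a finite set $J$ and a gp map $\tilde g_\bullet\colon\mathbb{Z}\to\{0,1,\dots,M-1\}$ parametrised by $[0,1)^J$ such that $\tilde g_\bullet$ extends $g_\bullet$.
   Context: A generalised polynomial (gp) map $\mathbb{R}^d\to\mathbb{R}$ is an element of the smallest family containing all polynomial maps and closed under pointwise sum, pointwise product and pointwise integer part; a map into $\mathbb{R}^m$ is gp if each coordinate is. For pairwise disjoint finite sets $I_r,I_i,I_f$ and $\Omega = \mathbb{R}^{I_r}\times\mathbb{Z}^{I_i}\times[0,1)^{I_f}$, a gp map $\mathbb{Z}\to S$ ($S\subset\mathbb{R}$) parametrised by $\Omega$ is a family $(g_\alpha)_{\alpha\in\Omega}$ of maps $\mathbb{Z}\to S$ such that $(\alpha,n)\mapsto g_\alpha(n)$ is the restriction to $\Omega\times\mathbb{Z}$ of a gp map $\mathbb{R}^{I_r\cup I_i\cup I_f}\times\mathbb{R}\to\mathbb{R}$. If $g_\bullet$ is parametrised by $\Omega$ and $h_\bullet$ by $\Omega'=\mathbb{R}^{J_r}\times\mathbb{Z}^{J_i}\times[0,1)^{J_f}$, then $h_\bullet$ extends $g_\bullet$ if there is a gp map $\varphi\colon\mathbb{R}^{I_r\cup I_i\cup I_f}\to\mathbb{R}^{J_r\cup J_i\cup J_f}$ with $\varphi(\Omega)\subset\Omega'$ and $g_\alpha=h_{\varphi(\alpha)}$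 for all $\alpha\in\Omega$. *)

theory Defs
  imports Complex_Main
begin

inductive gp :: "'v set \<Rightarrow> (('v \<Rightarrow> real) \<Rightarrow> real) \<Rightarrow> bool" for V where
  gp_const: "gp V (\<lambda>x. c)"
| gp_var: "v \<in> V \<Longrightarrow> gp V (\<lambda>x. x v)"
| gp_add: "gp V f \<Longrightarrow> gp V g \<Longrightarrow> gp V (\<lambda>x. f x + g x)"
| gp_mult: "gp V f \<Longrightarrow> gp V g \<Longrightarrow> gp V (\<lambda>x. f x * g x)"
| gp_floor: "gp V f \<Longrightarrow> gp V (\<lambda>x. real_of_int \<lfloor>f x\<rfloor>)"

definition gp_map :: "'v set \<Rightarrow> 'w set \<Rightarrow> (('v \<Rightarrow> real) \<Rightarrow> ('w \<Rightarrow> real)) \<Rightarrow> bool" where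
  "gp_map V W \<phi> \<longleftrightarrow> (\<forall>w\<in>W. gp V (\<lambda>x. \<phi> x w)) \<and> (\<forall>x. \<forall>w. w \<notin> W \<longrightarrow> \<phi> x w = 0)"

text \<open>Parameter space \<open>\<Omega> = \<real>^Irr \<times> \<int>^Iii \<times> [0,1)^Iff\<close>, as functions vanishing outside
  \<open>Irr \<union> Iii \<union> Iff\<close>.\<close>
definition Omega :: "'v set \<Rightarrow> 'v set \<Rightarrow> 'v set \<Rightarrow> ('v \<Rightarrow> real) set" where
  "Omega Irr Iii Iff = {\<alpha>. (\<forall>i\<in>Iii. \<alpha> i \<in> \<int>) \<and> (\<forall>i\<in>Iff. 0 \<le> \<alpha> i \<and> \<alpha> i < 1)
                         \<and> (\<forall>i. i \<notin> Irr \<union> Iii \<union> Iff \<longrightarrow> \<alpha> i = 0)}"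

text \<open>A gp map \<open>\<int> \<rightarrow> S\<close> parametrised by \<open>\<Omega> = Omega Irr Iii Iff\<close>: the family
  \<open>(g \<alpha>)\<^sub>\<alpha>\<^sub>\<in>\<^sub>\<Omega>\<close> takes values in S and \<open>(\<alpha>,n) \<mapsto> g \<alpha> n\<close> is the restriction of a gp map
  on \<open>\<real>^(Irr \<union> Iii \<union> Iff) \<times> \<real>\<close> (the extra variable \<open>None\<close> is n).\<close>
definition gp_param :: "'v set \<Rightarrow> 'v set \<Rightarrow> 'v set \<Rightarrow> real set \<Rightarrow>
    (('v \<Rightarrow> real) \<Rightarrow> int \<Rightarrow> real) \<Rightarrow> bool" where
  "gp_param Irr Iii Iff S g \<longleftrightarrow>
     (\<forall>\<alpha>\<in>Omega Irr Iii Iff. \<forall>n. g \<alpha> n \<in> S) \<and>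
     (\<exists>F. gp (insert None (Some ` (Irr \<union> Iii \<union> Iff))) F \<and>
        (\<forall>\<alpha>\<in>Omega Irr Iii Iff. \<forall>n::int.
            g \<alpha> n = F (\<lambda>v. case v of None \<Rightarrow> real_of_int n | Some i \<Rightarrow> \<alpha> i)))"

definition gp_extends ::
    "'w set \<Rightarrow> 'w set \<Rightarrow> 'w set \<Rightarrow> (('w \<Rightarrow> real) \<Rightarrow> int \<Rightarrow> real) \<Rightarrow>
     'v set \<Rightarrow> 'v set \<Rightarrow> 'v set \<Rightarrow> (('v \<Rightarrow> real) \<Rightarrow> int \<Rightarrow> real) \<Rightarrow> bool" where
  "gp_extends Jr Ji Jf h Irr Iii Iff g \<longleftrightarrow>
     (\<exists>\<phi>. gp_map (Irr \<union> Iii \<union> Iff) (Jr \<union> Ji \<union> Jf) \<phi> \<and>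
          \<phi> ` Omega Irr Iii Iff \<subseteq> Omega Jr Ji Jf \<and>
          (\<forall>\<alpha>\<in>Omega Irr Iii Iff. g \<alpha> = h (\<phi> \<alpha>)))"

end

theory Submission
  imports Defs
begin

lemma gp_rename:
  assumes "gp V f" "\<And>v. v \<in> V \<Longrightarrow> \<sigma> v \<in> W"
  shows "gp W (\<lambda>x. f (\<lambda>v. x (\<sigma> v)))"
  using assms(1)
proof (induction rule: gp.induct)
  case (gp_const c) then show ?case by (rule gp.gp_const)
next
  case (gp_var v) then show ?case using assms(2) by (auto intro: gp.gp_var)
next
  case (gp_add f g) show ?case by (rule gp.gp_add[OF gp_add.IH])
next
  case (gp_mult f g) show ?case by (rule gp.gp_mult[OF gp_mult.IH])
next
  case (gp_floor f) show ?case by (rule gp.gp_floor[OF gp_floor.IH])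
qed

lemma gp_mono: "gp V f \<Longrightarrow> V \<subseteq> W \<Longrightarrow> gp W f"
  by (induction rule: gp.induct) (auto intro: gp.intros)

lemma gp_local: assumes "gp V f" "\<And>v. v \<in> V \<Longrightarrow> x v = y v" shows "f x = f y"
  using assms(1) by (induction rule: gp.induct) (auto simp: assms(2))

lemma gp_sum: "(\<And>k. k < (L::nat) \<Longrightarrow> gp V (f k)) \<Longrightarrow> gp V (\<lambda>x. \<Sum>k<L. f k x)"
  by (induction L) (auto intro: gp.intros)

lemma gp_sum_list: "(\<And>f. f \<in> set fs \<Longrightarrow> gp V f) \<Longrightarrow> gp V (\<lambda>x. sum_list (map (\<lambda>f. f x) fs))"
  by (induction fs) (auto intro: gp.intros)

lemma gp_neg: "gp V f \<Longrightarrow> gp V (\<lambda>x. - f x)"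
  using gp.gp_mult[OF gp.gp_const[of V "-1"], of f] by simp

lemma gp_diff: "gp V f \<Longrightarrow> gp V g \<Longrightarrow> gp V (\<lambda>x. f x - g x)"
  using gp.gp_add[OF _ gp_neg[of V g]] by simp

lemma gp_cmult: "gp V f \<Longrightarrow> gp V (\<lambda>x. c * f x)"
  using gp.gp_mult[OF gp.gp_const[of V c], of f] by simp

lemma gp_frac: "gp V f \<Longrightarrow> gp V (\<lambda>x. frac (f x))"
  unfolding frac_def by (intro gp_diff gp.gp_floor)

definition envP :: "(nat \<Rightarrow> ('a \<Rightarrow> real) \<Rightarrow> real) \<Rightarrow> ('a \<Rightarrow> real) \<Rightarrow> int \<Rightarrow> nat option \<Rightarrow> real" where
  "envP p \<alpha> n = (\<lambda>v. case v of None \<Rightarrow> real_of_int n | Some j \<Rightarrow> p j \<alpha>)"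

definition env :: "('a \<Rightarrow> real) \<Rightarrow> int \<Rightarrow> 'a option \<Rightarrow> real" where
  "env \<alpha> n = (\<lambda>v. case v of None \<Rightarrow> real_of_int n | Some i \<Rightarrow> \<alpha> i)"

definition evalT :: "(nat \<Rightarrow> ('a \<Rightarrow> real) \<Rightarrow> real) \<Rightarrow>
   ((('a \<Rightarrow> real) \<Rightarrow> real) \<times> ((nat option \<Rightarrow> real) \<Rightarrow> real)) list \<Rightarrow> ('a \<Rightarrow> real) \<Rightarrow> int \<Rightarrow> real" where
  "evalT p ts \<alpha> n = sum_list (map (\<lambda>(c,b). c \<alpha> * b (envP p \<alpha> n)) ts)"

definition validT :: "'a set \<Rightarrow> (nat \<Rightarrow> ('a \<Rightarrow> real) \<Rightarrow> real) \<Rightarrow> nat \<Rightarrow>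
   ((('a \<Rightarrow> real) \<Rightarrow> real) \<times> ((nat option \<Rightarrow> real) \<Rightarrow> real)) list \<Rightarrow> bool" where
  "validT I p m ts \<longleftrightarrow> (\<forall>j<m. gp I (p j) \<and> (\<forall>\<alpha>. 0 \<le> p j \<alpha> \<and> p j \<alpha> < 1)) \<and>
     (\<forall>(c,b)\<in>set ts. gp I c \<and> gp (insert None (Some ` {..<m})) b \<and> (\<forall>x. x None \<in> \<int> \<longrightarrow> b x \<in> \<int>))"

definition rep :: "'a set \<Rightarrow> (('a option \<Rightarrow> real) \<Rightarrow> real) \<Rightarrow> bool" where
  "rep I F \<longleftrightarrow> (\<exists>p m ts. validT I p m ts \<and> (\<forall>\<alpha> n. F (env \<alpha> n) = evalT p ts \<alpha> n))"

lemma evalT_append: "evalT p (ts1 @ ts2) \<alpha> n = evalT p ts1 \<alpha> n + evalT p ts2 \<alpha> n"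
  by (simp add: evalT_def)

definition prodT where
  "prodT ts1 ts2 = concat (map (\<lambda>(c1,b1). map (\<lambda>(c2,b2). (\<lambda>\<alpha>. c1 \<alpha> * c2 \<alpha>, \<lambda>x. b1 x * b2 x)) ts2) ts1)"

lemma evalT_prod_aux:
  fixes c1 :: "('a \<Rightarrow> real) \<Rightarrow> real" and e :: "nat option \<Rightarrow> real"
  shows "sum_list (map ((\<lambda>(c,b). c \<alpha> * b e) \<circ> (\<lambda>(c2,b2). (\<lambda>\<alpha>. c1 \<alpha> * c2 \<alpha>, \<lambda>x. b1 x * b2 x))) ts2)
   = c1 \<alpha> * b1 e * sum_list (map (\<lambda>(c,b). c \<alpha> * b e) ts2)"
  by (induction ts2) (auto simp: algebra_simps)

lemma evalT_prod: "evalT p (prodT ts1 ts2) \<alpha> n = evalT p ts1 \<alpha> n * evalT p ts2 \<alpha> n"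
  unfolding evalT_def prodT_def
  by (induction ts1) (auto simp: evalT_prod_aux algebra_simps)

lemma validT_append: "validT I p m ts1 \<Longrightarrow> validT I p m ts2 \<Longrightarrow> validT I p m (ts1 @ ts2)"
  by (auto simp: validT_def)

lemma mem_concat_pairs:
  "x \<in> set (concat (map (\<lambda>(a,b). map (\<lambda>(c,d). f a b c d) ys) xs)) \<Longrightarrow>
   \<exists>a b c d. (a,b)\<in>set xs \<and> (c,d)\<in>set ys \<and> x = f a b c d"
  by (induction xs) (fastforce split: prod.splits)+

lemma validT_prod: "validT I p m ts1 \<Longrightarrow> validT I p m ts2 \<Longrightarrow> validT I p m (prodT ts1 ts2)"
proof -
  assume A: "validT I p m ts1" "validT I p m ts2"
  let ?W = "insert None (Some ` {..<m})"
  have T1: "\<forall>(c,b)\<in>set ts1. gp I c \<and> gp ?W b \<and> (\<forall>x. x None \<in> \<int> \<longrightarrow> b x \<in> \<int>)"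
    using A(1) unfolding validT_def by (elim conjE)
  have T2: "\<forall>(c,b)\<in>set ts2. gp I c \<and> gp ?W b \<and> (\<forall>x. x None \<in> \<int> \<longrightarrow> b x \<in> \<int>)"
    using A(2) unfolding validT_def by (elim conjE)
  have "gp I c \<and> gp ?W b \<and> (\<forall>x. x None \<in> \<int> \<longrightarrow> b x \<in> \<int>)"
    if "(c,b) \<in> set (prodT ts1 ts2)" for c b
  proof -
    from that obtain c1 b1 c2 b2 where m1: "(c1,b1) \<in> set ts1" and m2: "(c2,b2) \<in> set ts2" and
      e: "(c,b) = (\<lambda>\<alpha>. c1 \<alpha> * c2 \<alpha>, \<lambda>x. b1 x * b2 x)"
      using mem_concat_pairs[where f="\<lambda>c1 b1 c2 b2. (\<lambda>\<alpha>. c1 \<alpha> * c2 \<alpha>, \<lambda>x. b1 x * b2 x)", of "(c,b)" ts2 ts1]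
      unfolding prodT_def by blast
    from bspec[OF T1 m1] have h1: "gp I c1" "gp ?W b1" "\<forall>x. x None \<in> \<int> \<longrightarrow> b1 x \<in> \<int>" by simp_all
    from bspec[OF T2 m2] have h2: "gp I c2" "gp ?W b2" "\<forall>x. x None \<in> \<int> \<longrightarrow> b2 x \<in> \<int>" by simp_all
    from e have "c = (\<lambda>\<alpha>. c1 \<alpha> * c2 \<alpha>)" "b = (\<lambda>x. b1 x * b2 x)" by simp_all
    then show ?thesis using h1 h2 by (simp add: gp.gp_mult Ints_mult)
  qed
  then show ?thesis using A unfolding validT_def by blast
qed

lemma combine:
  assumes A1: "validT I p1 m1 ts1" and A2: "validT I p2 m2 ts2"
  shows "\<exists>p m ts1' ts2'. validT I p m ts1' \<and> validT I p m ts2' \<and>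
     (\<forall>\<alpha> n. evalT p ts1' \<alpha> n = evalT p1 ts1 \<alpha> n \<and> evalT p ts2' \<alpha> n = evalT p2 ts2 \<alpha> n)"
proof -
  define p where "p = (\<lambda>j. if j < m1 then p1 j else p2 (j - m1))"
  define ts2' where "ts2' = map (\<lambda>(c,b). (c, \<lambda>x. b (\<lambda>v. x (map_option (\<lambda>j. j + m1) v)))) ts2"
  have P: "\<forall>j<m1 + m2. gp I (p j) \<and> (\<forall>\<alpha>. 0 \<le> p j \<alpha> \<and> p j \<alpha> < 1)"
      using A1 A2 unfolding validT_def p_def by auto
  have sub: "insert None (Some ` {..<m1}) \<subseteq> insert None (Some ` {..<m1+m2})" by auto
  have v1: "validT I p (m1+m2) ts1"
    using A1 P gp_mono[OF _ sub] unfolding validT_def by fastforce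
  have v2: "validT I p (m1+m2) ts2'"
    unfolding validT_def
  proof (intro conjI)
    show "\<forall>j<m1 + m2. gp I (p j) \<and> (\<forall>\<alpha>. 0 \<le> p j \<alpha> \<and> p j \<alpha> < 1)" by (fact P)
    show "\<forall>(c, b)\<in>set ts2'. gp I c \<and> gp (insert None (Some ` {..<m1 + m2})) b \<and> (\<forall>x. x None \<in> \<int> \<longrightarrow> b x \<in> \<int>)"
    proof
      fix t assume "t \<in> set ts2'"
      then obtain c b where cb: "(c,b) \<in> set ts2" "t = (c, \<lambda>x. b (\<lambda>v. x (map_option (\<lambda>j. j + m1) v)))"
        unfolding ts2'_def by auto
      have "gp (insert None (Some ` {..<m1 + m2})) (\<lambda>x. b (\<lambda>v. x (map_option (\<lambda>j. j + m1) v)))"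
        by (rule gp_rename) (use A2 cb in \<open>auto simp: validT_def\<close>)
      moreover have "\<forall>x. x None \<in> \<int> \<longrightarrow> b (\<lambda>v. x (map_option (\<lambda>j. j + m1) v)) \<in> \<int>"
        using A2 cb unfolding validT_def by auto
      ultimately show "case t of (c, b) \<Rightarrow> gp I c \<and> gp (insert None (Some ` {..<m1 + m2})) b \<and> (\<forall>x. x None \<in> \<int> \<longrightarrow> b x \<in> \<int>)"
        using A2 cb unfolding validT_def by auto
    qed
  qed
  have e1: "evalT p ts1 \<alpha> n = evalT p1 ts1 \<alpha> n" for \<alpha> n
  proof -
    have "b (envP p \<alpha> n) = b (envP p1 \<alpha> n)" if "(c,b) \<in> set ts1" for c b
      by (rule gp_local[of "insert None (Some ` {..<m1})"]) 
         (use A1 that in \<open>auto simp: validT_def envP_def p_def\<close>)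
    then show ?thesis unfolding evalT_def by (intro arg_cong[where f=sum_list] map_cong) auto
  qed
  have e2: "evalT p ts2' \<alpha> n = evalT p2 ts2 \<alpha> n" for \<alpha> n
  proof -
    have eq: "(\<lambda>v. envP p \<alpha> n (map_option (\<lambda>j. j + m1) v)) = envP p2 \<alpha> n"
      by (rule ext) (auto simp: envP_def p_def split: option.split)
    show ?thesis unfolding evalT_def ts2'_def map_map comp_def case_prod_unfold fst_conv snd_conv eq ..
  qed
  show ?thesis using v1 v2 e1 e2 by blast
qed

lemma rep_add: "rep I F \<Longrightarrow> rep I G \<Longrightarrow> rep I (\<lambda>x. F x + G x)"
proof -
  assume "rep I F" "rep I G"
  then obtain p1 m1 ts1 p2 m2 ts2 where a: "validT I p1 m1 ts1" "\<forall>\<alpha> n. F (env \<alpha> n) = evalT p1 ts1 \<alpha> n"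
    "validT I p2 m2 ts2" "\<forall>\<alpha> n. G (env \<alpha> n) = evalT p2 ts2 \<alpha> n" unfolding rep_def by blast
  from combine[OF a(1) a(3)] obtain p m ts1' ts2' where
    b: "validT I p m ts1'" "validT I p m ts2'" "\<forall>\<alpha> n. evalT p ts1' \<alpha> n = evalT p1 ts1 \<alpha> n \<and> evalT p ts2' \<alpha> n = evalT p2 ts2 \<alpha> n"
    by blast
  show ?thesis unfolding rep_def
    by (rule exI[of _ p], rule exI[of _ m], rule exI[of _ "ts1' @ ts2'"])
       (use a b in \<open>simp add: validT_append evalT_append\<close>)
qed

lemma rep_mult: "rep I F \<Longrightarrow> rep I G \<Longrightarrow> rep I (\<lambda>x. F x * G x)"
proof -
  assume "rep I F" "rep I G"
  then obtain p1 m1 ts1 p2 m2 ts2 where a: "validT I p1 m1 ts1" "\<forall>\<alpha> n. F (env \<alpha> n) = evalT p1 ts1 \<alpha> n"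
    "validT I p2 m2 ts2" "\<forall>\<alpha> n. G (env \<alpha> n) = evalT p2 ts2 \<alpha> n" unfolding rep_def by blast
  from combine[OF a(1) a(3)] obtain p m ts1' ts2' where
    b: "validT I p m ts1'" "validT I p m ts2'" "\<forall>\<alpha> n. evalT p ts1' \<alpha> n = evalT p1 ts1 \<alpha> n \<and> evalT p ts2' \<alpha> n = evalT p2 ts2 \<alpha> n"
    by blast
  show ?thesis unfolding rep_def
    by (rule exI[of _ p], rule exI[of _ m], rule exI[of _ "prodT ts1' ts2'"])
       (use a b in \<open>simp add: validT_prod evalT_prod\<close>)
qed

lemma sum_list_map_nth: "sum_list (map f xs) = (\<Sum>k<length xs. f (xs ! k))"
  by (simp add: sum_list_sum_nth atLeast0LessThan)

lemma floor_split:
  fixes c B :: "nat \<Rightarrow> real"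
  assumes "\<And>k. k < L \<Longrightarrow> B k \<in> \<int>"
  shows "real_of_int \<lfloor>\<Sum>k<L. c k * B k\<rfloor> =
         (\<Sum>k<L. real_of_int \<lfloor>c k\<rfloor> * B k) + real_of_int \<lfloor>\<Sum>k<L. frac (c k) * B k\<rfloor>"
proof -
  define Z where "Z = (\<Sum>k<L. \<lfloor>c k\<rfloor> * \<lfloor>B k\<rfloor>)"
  have Z: "(\<Sum>k<L. real_of_int \<lfloor>c k\<rfloor> * B k) = real_of_int Z"
    unfolding Z_def of_int_sum of_int_mult
  proof (intro sum.cong refl)
    fix k assume "k \<in> {..<L}"
    then have "B k \<in> \<int>" using assms by simp
    then have fk: "real_of_int \<lfloor>B k\<rfloor> = B k" by (elim Ints_cases) simp
    show "real_of_int \<lfloor>c k\<rfloor> * B k = real_of_int \<lfloor>c k\<rfloor> * real_of_int \<lfloor>B k\<rfloor>" by (simp only: fk)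
  qed
  have "(\<Sum>k<L. c k * B k) = (\<Sum>k<L. real_of_int \<lfloor>c k\<rfloor> * B k + frac (c k) * B k)"
    by (intro sum.cong refl) (simp add: frac_def algebra_simps)
  also have "\<dots> = real_of_int Z + (\<Sum>k<L. frac (c k) * B k)" by (simp only: sum.distrib Z)
  finally have "\<lfloor>\<Sum>k<L. c k * B k\<rfloor> = \<lfloor>real_of_int Z + (\<Sum>k<L. frac (c k) * B k)\<rfloor>" by simp
  also have "\<dots> = Z + \<lfloor>\<Sum>k<L. frac (c k) * B k\<rfloor>" by (rule int_add_floor[symmetric])
  finally show ?thesis by (simp add: Z)
qed

lemma rep_const: "rep I (\<lambda>x. c)"
  unfolding rep_def
  by (rule exI[of _ "\<lambda>_ _. 0"], rule exI[of _ 0], rule exI[of _ "[(\<lambda>\<alpha>. c, \<lambda>x. 1)]"])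
     (auto simp: validT_def evalT_def intro: gp.intros)

lemma rep_var: "v \<in> insert None (Some ` I) \<Longrightarrow> rep I (\<lambda>x. x v)"
proof -
  assume v: "v \<in> insert None (Some ` I)"
  show ?thesis
  proof (cases v)
    case None
    show ?thesis unfolding rep_def
      by (rule exI[of _ "\<lambda>_ _. 0"], rule exI[of _ 0], rule exI[of _ "[(\<lambda>\<alpha>. 1, \<lambda>x. x None)]"])
         (auto simp: validT_def evalT_def env_def envP_def None intro: gp.intros)
  next
    case (Some i)
    with v have "i \<in> I" by auto
    then show ?thesis unfolding rep_def
      by (intro exI[of _ "\<lambda>_ _. 0"] exI[of _ 0] exI[of _ "[(\<lambda>\<alpha>. \<alpha> i, \<lambda>x. 1)]"])
         (auto simp: validT_def evalT_def env_def envP_def Some intro: gp.intros)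
  qed
qed

lemma rep_floor: "rep I F \<Longrightarrow> rep I (\<lambda>x. real_of_int \<lfloor>F x\<rfloor>)"
proof -
  assume "rep I F"
  then obtain p m ts where V: "validT I p m ts" and E: "\<forall>\<alpha> n. F (env \<alpha> n) = evalT p ts \<alpha> n"
    unfolding rep_def by blast
  define L where "L = length ts"
  define cf where "cf k = fst (ts ! k)" for k
  define bf where "bf k = snd (ts ! k)" for k
  have tsk: "(cf k, bf k) \<in> set ts" if "k < L" for k using that unfolding cf_def bf_def L_def by simp
  have cfgp: "gp I (cf k)" and bfgp: "gp (insert None (Some ` {..<m})) (bf k)"
    and bfint: "\<And>x. x None \<in> \<int> \<Longrightarrow> bf k x \<in> \<int>" if "k < L" for k
    using V tsk[OF that] unfolding validT_def by auto
  define p' where "p' j = (if j < m then p j else (\<lambda>\<alpha>. frac (cf (j - m) \<alpha>)))" for j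
  define ts' where "ts' = map (\<lambda>(c,b). (\<lambda>\<alpha>. real_of_int \<lfloor>c \<alpha>\<rfloor>, b)) ts @
       [(\<lambda>\<alpha>. 1, \<lambda>x. real_of_int \<lfloor>\<Sum>k<L. x (Some (m+k)) * bf k x\<rfloor>)]"
  have sub: "insert None (Some ` {..<m}) \<subseteq> insert None (Some ` {..<m+L})" by auto
  have P: "\<forall>j<m + L. gp I (p' j) \<and> (\<forall>\<alpha>. 0 \<le> p' j \<alpha> \<and> p' j \<alpha> < 1)"
  proof (intro allI impI)
    fix j assume j: "j < m + L"
    show "gp I (p' j) \<and> (\<forall>\<alpha>. 0 \<le> p' j \<alpha> \<and> p' j \<alpha> < 1)"
    proof (cases "j < m")
      case True then show ?thesis using V unfolding validT_def p'_def by auto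
    next
      case False
      then have "j - m < L" using j by auto
      then show ?thesis using False cfgp[of "j-m"] unfolding p'_def
        by (auto intro: gp_frac frac_lt_1)
    qed
  qed
  have V': "validT I p' (m+L) ts'"
    unfolding validT_def
  proof (intro conjI P ballI)
    fix t assume "t \<in> set ts'"
    then consider (a) c b where "(c,b) \<in> set ts" "t = (\<lambda>\<alpha>. real_of_int \<lfloor>c \<alpha>\<rfloor>, b)"
      | (b) "t = (\<lambda>\<alpha>. 1, \<lambda>x. real_of_int \<lfloor>\<Sum>k<L. x (Some (m+k)) * bf k x\<rfloor>)"
      unfolding ts'_def by auto
    then show "case t of (c, b) \<Rightarrow> gp I c \<and> gp (insert None (Some ` {..<m + L})) b \<and> (\<forall>x. x None \<in> \<int> \<longrightarrow> b x \<in> \<int>)"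
    proof cases
      case a then show ?thesis using V gp_mono[OF _ sub] unfolding validT_def
        by (fastforce intro: gp.gp_floor)
    next
      case b
      have "gp (insert None (Some ` {..<m + L})) (\<lambda>x. real_of_int \<lfloor>\<Sum>k<L. x (Some (m+k)) * bf k x\<rfloor>)"
        by (intro gp.gp_floor gp_sum gp.gp_mult gp.gp_var gp_mono[OF bfgp sub]) auto
      then show ?thesis using b by (auto intro: gp.gp_const)
    qed
  qed
  have E': "real_of_int \<lfloor>F (env \<alpha> n)\<rfloor> = evalT p' ts' \<alpha> n" for \<alpha> n
  proof -
    have loc: "bf k (envP p' \<alpha> n) = bf k (envP p \<alpha> n)" if "k < L" for k
      by (rule gp_local[OF bfgp[OF that]]) (auto simp: envP_def p'_def)
    have ints: "bf k (envP p \<alpha> n) \<in> \<int>" if "k < L" for k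
      by (rule bfint[OF that]) (simp add: envP_def)
    have "F (env \<alpha> n) = (\<Sum>k<L. cf k \<alpha> * bf k (envP p \<alpha> n))"
      using E unfolding evalT_def sum_list_map_nth L_def cf_def bf_def by (simp add: case_prod_unfold)
    then have h1: "real_of_int \<lfloor>F (env \<alpha> n)\<rfloor> = (\<Sum>k<L. real_of_int \<lfloor>cf k \<alpha>\<rfloor> * bf k (envP p \<alpha> n))
         + real_of_int \<lfloor>\<Sum>k<L. frac (cf k \<alpha>) * bf k (envP p \<alpha> n)\<rfloor>"
      using floor_split[of L "\<lambda>k. bf k (envP p \<alpha> n)" "\<lambda>k. cf k \<alpha>"] ints by simp
    have sv: "envP p' \<alpha> n (Some (m+k)) = frac (cf k \<alpha>)" for k by (simp add: envP_def p'_def)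
    have s1: "(\<Sum>k<L. real_of_int \<lfloor>cf k \<alpha>\<rfloor> * bf k (envP p \<alpha> n)) = (\<Sum>k<L. real_of_int \<lfloor>cf k \<alpha>\<rfloor> * bf k (envP p' \<alpha> n))"
      by (intro sum.cong refl) (simp add: loc)
    have s2: "(\<Sum>k<L. frac (cf k \<alpha>) * bf k (envP p \<alpha> n)) = (\<Sum>k<L. envP p' \<alpha> n (Some (m+k)) * bf k (envP p' \<alpha> n))"
      by (intro sum.cong refl) (simp add: loc sv)
    have "(\<Sum>k<L. real_of_int \<lfloor>cf k \<alpha>\<rfloor> * bf k (envP p \<alpha> n))
         + real_of_int \<lfloor>\<Sum>k<L. frac (cf k \<alpha>) * bf k (envP p \<alpha> n)\<rfloor> = 
         (\<Sum>k<L. real_of_int \<lfloor>cf k \<alpha>\<rfloor> * bf k (envP p' \<alpha> n))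
         + real_of_int \<lfloor>\<Sum>k<L. envP p' \<alpha> n (Some (m+k)) * bf k (envP p' \<alpha> n)\<rfloor>"
      by (simp only: s1 s2)
    also have "\<dots> = evalT p' ts' \<alpha> n"
      unfolding ts'_def evalT_append
      by (simp add: evalT_def sum_list_map_nth L_def[symmetric] case_prod_unfold cf_def[symmetric] bf_def[symmetric])
    finally show ?thesis using h1 by simp
  qed
  show ?thesis unfolding rep_def using V' E' by blast
qed

lemma gp_rep: "gp (insert None (Some ` I)) F \<Longrightarrow> rep I F"
  by (induction rule: gp.induct) (auto intro: rep_const rep_var rep_add rep_mult rep_floor)

lemma gp_div_const: "gp V f \<Longrightarrow> gp V (\<lambda>x. f x / c)"
  using gp.gp_mult[OF _ gp.gp_const[of V "inverse c"], of f] by (simp add: divide_inverse)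

lemma mod_real:
  assumes "M > 0"
  shows "real_of_int z - real M * real_of_int \<lfloor>real_of_int z / real M\<rfloor> = real_of_int (z mod int M)"
proof -
  have "\<lfloor>real_of_int z / real M\<rfloor> = z div int M"
    using floor_divide_of_int_eq[of z "int M", where 'a=real] by simp
  then show ?thesis by (simp add: minus_div_mult_eq_mod[symmetric])
qed

theorem proposition3p5:
  fixes M :: nat and I :: "'a set" and g :: "('a \<Rightarrow> real) \<Rightarrow> int \<Rightarrow> real"
  assumes "finite I"
    and "gp_param I {} {} (real ` {0..<M}) g"
  shows "\<exists>(J :: nat set) (h :: (nat \<Rightarrow> real) \<Rightarrow> int \<Rightarrow> real).
           finite J \<and> gp_param {} {} J (real ` {0..<M}) h \<and>
           gp_extends {} {} J h I {} {} g"
proof -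
  from assms(2) obtain F where rng: "\<forall>\<alpha>\<in>Omega I {} {}. \<forall>n. g \<alpha> n \<in> real ` {0..<M}"
    and Fgp: "gp (insert None (Some ` I)) F"
    and gF: "\<forall>\<alpha>\<in>Omega I {} {}. \<forall>n. g \<alpha> n = F (env \<alpha> n)"
    unfolding gp_param_def env_def by auto
  have "(\<lambda>_. 0) \<in> Omega I {} {}" by (simp add: Omega_def)
  with rng have Mpos: "M > 0" by fastforce
  from gp_rep[OF Fgp] obtain p m ts where V: "validT I p m ts" and E: "\<forall>\<alpha> n. F (env \<alpha> n) = evalT p ts \<alpha> n"
    unfolding rep_def by blast
  define L where "L = length ts"
  define cf where "cf k = fst (ts ! k)" for k
  define bf where "bf k = snd (ts ! k)" for k
  have tsk: "(cf k, bf k) \<in> set ts" if "k < L" for k using that unfolding cf_def bf_def L_def by simp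
  have cfgp: "gp I (cf k)" and bfgp: "gp (insert None (Some ` {..<m})) (bf k)"
    and bfint: "\<And>x. x None \<in> \<int> \<Longrightarrow> bf k x \<in> \<int>" if "k < L" for k
    using V tsk[OF that] unfolding validT_def by auto
  define J where "J = {..<m+L}"
  define \<phi> where "\<phi> \<alpha> = (\<lambda>j. if j < m then p j \<alpha> else if j < m + L then frac (cf (j - m) \<alpha> / real M) else 0)" for \<alpha>
  define S where "S y = (\<Sum>k<L. real M * y (Some (m+k)) * bf k y)" for y :: "nat option \<Rightarrow> real"
  define Ft where "Ft y = real_of_int \<lfloor>S y\<rfloor> - real M * real_of_int \<lfloor>real_of_int \<lfloor>S y\<rfloor> / real M\<rfloor>" for y
  define h where "h \<beta> n = Ft (\<lambda>v. case v of None \<Rightarrow> real_of_int n | Some i \<Rightarrow> \<beta> i)" for \<beta> and n :: int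
  have sub: "insert None (Some ` {..<m}) \<subseteq> insert None (Some ` J)" unfolding J_def by auto
  have Ftgp: "gp (insert None (Some ` J)) Ft"
  proof -
    have Sgp: "gp (insert None (Some ` J)) S"
      unfolding S_def[abs_def]
      by (intro gp_sum gp.gp_mult gp.gp_const gp.gp_var gp_mono[OF bfgp sub]) (auto simp: J_def)
    show ?thesis unfolding Ft_def[abs_def]
      by (intro gp_diff gp_cmult gp.gp_floor gp_div_const Sgp)
  qed
  have Ftval: "Ft y = real_of_int (\<lfloor>S y\<rfloor> mod int M)" for y
    unfolding Ft_def using mod_real[OF Mpos] by simp
  have Ftrange: "Ft y \<in> real ` {0..<M}" for y
  proof -
    have "0 \<le> \<lfloor>S y\<rfloor> mod int M" "\<lfloor>S y\<rfloor> mod int M < int M" using Mpos by auto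
    then have "nat (\<lfloor>S y\<rfloor> mod int M) \<in> {0..<M}" "Ft y = real (nat (\<lfloor>S y\<rfloor> mod int M))"
      by (auto simp: Ftval)
    then show ?thesis by blast
  qed
  have hparam: "gp_param {} {} J (real ` {0..<M}) h"
    unfolding gp_param_def using Ftgp Ftrange by (auto simp: h_def)
  have phimap: "gp_map I J \<phi>"
    unfolding gp_map_def
  proof (intro conjI ballI allI impI)
    fix w assume "w \<in> J"
    then show "gp I (\<lambda>x. \<phi> x w)"
    proof (cases "w < m")
      case True then show ?thesis using V unfolding validT_def \<phi>_def by simp
    next
      case False
      with \<open>w \<in> J\<close> have "w - m < L" by (auto simp: J_def)
      then show ?thesis using False \<open>w \<in> J\<close> cfgp[of "w - m"] unfolding \<phi>_def J_def
        by (auto intro: gp_frac gp_div_const)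
    qed
  next
    fix x w assume "w \<notin> J" then show "\<phi> x w = 0" by (simp add: \<phi>_def J_def)
  qed
  have phiOm: "\<phi> ` Omega I {} {} \<subseteq> Omega {} {} J"
    using V unfolding Omega_def validT_def \<phi>_def J_def by (auto intro: frac_lt_1)
  have ext: "g \<alpha> = h (\<phi> \<alpha>)" if \<alpha>: "\<alpha> \<in> Omega I {} {}" for \<alpha>
  proof
    fix n :: int
    define y where "y = (\<lambda>v. case v of None \<Rightarrow> real_of_int n | Some i \<Rightarrow> \<phi> \<alpha> i)"
    define B where "B k = bf k (envP p \<alpha> n)" for k
    have Bint: "B k \<in> \<int>" if "k < L" for k unfolding B_def by (rule bfint[OF that]) (simp add: envP_def)
    have loc: "bf k y = B k" if "k < L" for k unfolding B_def
      by (rule gp_local[OF bfgp[OF that]]) (auto simp: y_def envP_def \<phi>_def)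
    have yv: "y (Some (m+k)) = frac (cf k \<alpha> / real M)" if "k < L" for k
      using that by (simp add: y_def \<phi>_def)
    from rng \<alpha> obtain g0 where g0: "g0 < M" "g \<alpha> n = real g0" by fastforce
    have G: "g \<alpha> n = (\<Sum>k<L. cf k \<alpha> * B k)"
      using gF \<alpha> E unfolding evalT_def sum_list_map_nth L_def cf_def bf_def B_def by (simp add: case_prod_unfold)
    define T where "T = (\<Sum>k<L. \<lfloor>cf k \<alpha> / real M\<rfloor> * \<lfloor>B k\<rfloor>)"
    have "S y = (\<Sum>k<L. real M * frac (cf k \<alpha> / real M) * B k)"
      unfolding S_def by (intro sum.cong refl) (simp add: loc yv)
    also have "\<dots> = (\<Sum>k<L. cf k \<alpha> * B k - real M * (real_of_int \<lfloor>cf k \<alpha> / real M\<rfloor> * real_of_int \<lfloor>B k\<rfloor>))"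
    proof (intro sum.cong refl)
      fix k assume "k \<in> {..<L}"
      then have "B k = real_of_int \<lfloor>B k\<rfloor>" using Bint by simp
      then show "real M * frac (cf k \<alpha> / real M) * B k = cf k \<alpha> * B k - real M * (real_of_int \<lfloor>cf k \<alpha> / real M\<rfloor> * real_of_int \<lfloor>B k\<rfloor>)"
        using Mpos unfolding frac_def by (simp add: algebra_simps)
    qed
    also have "\<dots> = g \<alpha> n - real M * real_of_int T"
      unfolding G T_def sum_subtractf sum_distrib_left of_int_sum of_int_mult by simp
    also have "\<dots> = real_of_int (int g0 - int M * T)" using g0 by simp
    finally have Sy: "S y = real_of_int (int g0 - int M * T)" .
    have "(int g0 - int M * T) mod int M = (int g0 + (- T) * int M) mod int M" by (simp add: algebra_simps)
    also have "\<dots> = int g0 mod int M" by (rule mod_mult_self1)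
    also have "\<dots> = int g0" using g0 by simp
    finally have "(int g0 - int M * T) mod int M = int g0" .
    moreover have "\<lfloor>S y\<rfloor> = int g0 - int M * T" unfolding Sy by (rule floor_of_int)
    ultimately have "Ft y = real g0" using Ftval by simp
    then show "g \<alpha> n = h (\<phi> \<alpha>) n" using g0 by (simp add: h_def y_def)
  qed
  have "gp_extends {} {} J h I {} {} g"
    unfolding gp_extends_def using phimap phiOm ext by auto
  moreover have "finite J" by (simp add: J_def)
  ultimately show ?thesis using hparam by blast
qed

end
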